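(* (a) For integers $n\ge d\ge 2$ with $d\mid dn$ (always true), $\mathrm{diam}(Q_n(d,n))=n+\max\{\lfloor n/2\rfloor,\,2\lceil n/d\rceil-2\}$ (here $n\ge 3$). (b) For integers $d\ge1$, $r\ge3$ with $dr\ge 2$: $\mathrm{diam}(COR(d,r))=(d+1)r$ if $r=3$, and $\mathrm{diam}(COR(d,r))=(d+1)r+\lfloor r/2\rfloor-2$ if $r\ge4$.
   Context: For $m\ge1$, $\mathbb{Z}_2^m=\{0,1\}^m$ with coordinatewise addition mod 2; $e_i$ is the $i$-th standard basis vector, subscripts read modulo $m$; $\sigma^j(b)$ is the vector with $\sigma^j(b)_{i+j}=b_i$ (indices mod $m$). The recursive cube of rings $Q_n(d,r)$ (for $n\ge d$, $dr\equiv0\pmod n$) is the simple graph on $\mathbb{Z}_2^n\times\mathbb{Z}_r$ in which $(a,x)$ is adjacent to $(a+e_{i+dx},x)$ for $1\le i\le d$ and to $(a,x\pm1)$. The cube-of-rings $COR(d,r)$ is the Cayley graph on the group with underlying set $\mathbb{Z}_2^{dr}\times\mathbb{Z}_r$ and multiplication $(a,x)(b,y)=(\sigma^{dy}(a)+b,x+y)$, with connection set $\{(0_{dr},1),(0_{dr},r-1),(e_1,0),\dots,(e_d,0)\}$ ($u\sim v$ iff $u^{-1}v$ is in the connection set). *)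

theory Defs
  imports Main "HOL-Library.Extended_Nat"
begin

text \<open>A graph is given by a vertex set V and an adjacency relation E (assumed to
only relate vertices of V).\<close>

definition gdist :: "('a \<Rightarrow> 'a \<Rightarrow> bool) \<Rightarrow> 'a \<Rightarrow> 'a \<Rightarrow> enat" where
  "gdist E u v = (if \<exists>k. (E ^^ k) u v then enat (LEAST k. (E ^^ k) u v) else \<infinity>)"

definition gdiam :: "'a set \<Rightarrow> ('a \<Rightarrow> 'a \<Rightarrow> bool) \<Rightarrow> enat" where
  "gdiam V E = (SUP p \<in> V \<times> V. gdist E (fst p) (snd p))"

text \<open>A vector b in Z_2^m is represented by its support, a subset of {0..<m};
the paper's coordinate i (1 \<le> i \<le> m, read mod m) is position (i - 1) mod m here.
Addition is symmetric difference; e_i is the singleton {(i-1) mod m}.\<close>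

definition symdiff :: "nat set \<Rightarrow> nat set \<Rightarrow> nat set" where
  "symdiff A B = (A - B) \<union> (B - A)"

definition unitv :: "nat \<Rightarrow> nat \<Rightarrow> nat set" where
  "unitv m i = {(i + m - 1) mod m}"

definition shiftv :: "nat \<Rightarrow> nat \<Rightarrow> nat set \<Rightarrow> nat set" where
  "shiftv m j b = (\<lambda>i. (i + j) mod m) ` b"

definition Qverts :: "nat \<Rightarrow> nat \<Rightarrow> (nat set \<times> nat) set" where
  "Qverts n r = {(a, x). a \<subseteq> {0..<n} \<and> x < r}"

definition Qadj :: "nat \<Rightarrow> nat \<Rightarrow> nat \<Rightarrow> nat set \<times> nat \<Rightarrow> nat set \<times> nat \<Rightarrow> bool" where
  "Qadj n d r u v \<longleftrightarrow> u \<in> Qverts n r \<and> v \<in> Qverts n r \<and> u \<noteq> v \<and>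
     ((snd v = snd u \<and> (\<exists>i\<in>{1..d}. fst v = symdiff (fst u) (unitv n (i + d * snd u)))) \<or>
      (fst v = fst u \<and> (snd v = (snd u + 1) mod r \<or> snd v = (snd u + r - 1) mod r)))"

text \<open>Group on Z_2^{dr} \<times> Z_r with (a,x)(b,y) = (sigma^{dy}(a) + b, x + y).\<close>

definition cor_mult :: "nat \<Rightarrow> nat \<Rightarrow> nat set \<times> nat \<Rightarrow> nat set \<times> nat \<Rightarrow> nat set \<times> nat" where
  "cor_mult d r u v = (symdiff (shiftv (d * r) (d * snd v) (fst u)) (fst v), (snd u + snd v) mod r)"

definition cor_inv :: "nat \<Rightarrow> nat \<Rightarrow> nat set \<times> nat \<Rightarrow> nat set \<times> nat" where
  "cor_inv d r u = (shiftv (d * r) (d * ((r - snd u) mod r)) (fst u), (r - snd u) mod r)"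

definition cor_conn :: "nat \<Rightarrow> nat \<Rightarrow> (nat set \<times> nat) set" where
  "cor_conn d r = {({}, 1), ({}, r - 1)} \<union> {(unitv (d * r) i, 0) | i. i \<in> {1..d}}"

definition CORverts :: "nat \<Rightarrow> nat \<Rightarrow> (nat set \<times> nat) set" where
  "CORverts d r = {(a, x). a \<subseteq> {0..<d * r} \<and> x < r}"

definition CORadj :: "nat \<Rightarrow> nat \<Rightarrow> nat set \<times> nat \<Rightarrow> nat set \<times> nat \<Rightarrow> bool" where
  "CORadj d r u v \<longleftrightarrow> u \<in> CORverts d r \<and> v \<in> CORverts d r \<and>
     cor_mult d r (cor_inv d r u) v \<in> cor_conn d r"

end

theory Submission
  imports Defs
begin


lemma gdist_le: assumes "(E ^^ k) u v" shows "gdist E u v \<le> enat k"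
  using assms unfolding gdist_def by (auto intro: Least_le)

lemma gdist_ge: assumes "\<forall>j<k. \<not> (E ^^ j) u v" shows "enat k \<le> gdist E u v"
proof (cases "\<exists>j. (E ^^ j) u v")
  case True
  then have "(E ^^ (LEAST j. (E ^^ j) u v)) u v" by (rule LeastI_ex)
  then have "k \<le> (LEAST j. (E ^^ j) u v)" using assms not_le by blast
  then show ?thesis using True unfolding gdist_def by simp
next
  case False then show ?thesis unfolding gdist_def by simp
qed

lemma diam_eq:
  fixes E :: "'a \<Rightarrow> 'a \<Rightarrow> bool" and D :: nat
  assumes up: "\<forall>u\<in>V. \<forall>v\<in>V. \<exists>k\<le>D. (E ^^ k) u v"
  and u0: "u0 \<in> V" and v0: "v0 \<in> V" and lo: "\<forall>k<D. \<not> (E ^^ k) u0 v0"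
  shows "gdiam V E = enat D"
proof -
  have "gdiam V E \<le> enat D" unfolding gdiam_def
  proof (rule SUP_least)
    fix p assume "p \<in> V \<times> V"
    then obtain k where "k \<le> D" "(E^^k) (fst p) (snd p)" using up by force
    then show "gdist E (fst p) (snd p) \<le> enat D" using gdist_le[of k E]
      by (meson enat_ord_simps(1) order_trans)
  qed
  moreover have "enat D \<le> gdiam V E" unfolding gdiam_def
    using gdist_ge[OF lo] u0 v0 by (auto intro: SUP_upper2[where i="(u0,v0)"])
  ultimately show ?thesis by simp
qed

lemma symdiff_empty[simp]: "symdiff a {} = a" "symdiff {} a = a"
  unfolding symdiff_def by auto
lemma symdiff_self[simp]: "symdiff a a = {}" unfolding symdiff_def by auto
lemma symdiff_assoc: "symdiff (symdiff a b) c = symdiff a (symdiff b c)"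
  unfolding symdiff_def by auto
lemma symdiff_comm: "symdiff a b = symdiff b a" unfolding symdiff_def by auto
lemma symdiff_cancel[simp]: "symdiff a (symdiff a b) = b" unfolding symdiff_def by auto
lemma symdiff_sub: "a \<subseteq> X \<Longrightarrow> b \<subseteq> X \<Longrightarrow> symdiff a b \<subseteq> X" unfolding symdiff_def by auto
lemma symdiff_single_neq: "symdiff a {c} \<noteq> a" unfolding symdiff_def by auto
lemma symdiff_finite: "finite a \<Longrightarrow> finite b \<Longrightarrow> finite (symdiff a b)" unfolding symdiff_def by auto
lemma card_symdiff_single: "finite X \<Longrightarrow> card (symdiff X {c}) \<le> card X + 1"
proof -
  assume f: "finite X"
  have "symdiff X {c} \<subseteq> insert c X" unfolding symdiff_def by auto
  then have "card (symdiff X {c}) \<le> card (insert c X)" using f by (intro card_mono) auto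
  also have "\<dots> \<le> card X + 1" using f by (simp add: card_insert_if)
  finally show ?thesis .
qed
lemma symdiff_disj: "S1 \<inter> S2 = {} \<Longrightarrow> symdiff S1 S2 = S1 \<union> S2" unfolding symdiff_def by auto

definition Gverts :: "nat \<Rightarrow> nat \<Rightarrow> (nat set \<times> nat) set" where
  "Gverts N r = {(a, x). a \<subseteq> {0..<N} \<and> x < r}"

definition Wd :: "nat \<Rightarrow> nat \<Rightarrow> nat \<Rightarrow> nat set" where
  "Wd N d p = (\<lambda>i. (i + d * p + N - 1) mod N) ` {1..d}"

definition Gadj :: "nat \<Rightarrow> nat \<Rightarrow> nat \<Rightarrow> nat set \<times> nat \<Rightarrow> nat set \<times> nat \<Rightarrow> bool" where
  "Gadj N r d u v \<longleftrightarrow> u \<in> Gverts N r \<and> v \<in> Gverts N r \<and> u \<noteq> v \<and>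
     ((snd v = snd u \<and> (\<exists>c\<in>Wd N d (snd u). fst v = symdiff (fst u) {c})) \<or>
      (fst v = fst u \<and> (snd v = (snd u + 1) mod r \<or> snd v = (snd u + r - 1) mod r)))"

definition pos :: "nat \<Rightarrow> nat \<Rightarrow> int \<Rightarrow> nat" where
  "pos r x t = nat ((int x + t) mod int r)"

lemma pos_lt: "r > 0 \<Longrightarrow> pos r x t < r"
  unfolding pos_def by (simp add: nat_less_iff)

lemma pos_0: "x < r \<Longrightarrow> pos r x 0 = x"
  unfolding pos_def by simp

lemma pos_int: "r > 0 \<Longrightarrow> int (pos r x t) = (int x + t) mod int r"
  unfolding pos_def by simp

lemma pos_plus1: assumes "r > 0" shows "pos r x (t + 1) = (pos r x t + 1) mod r"
proof -
  have "int (pos r x (t+1)) = (int x + t + 1) mod int r" using pos_int[OF assms] by (simp add: add.assoc)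
  also have "\<dots> = ((int x + t) mod int r + 1) mod int r" by (simp add: mod_add_left_eq)
  also have "\<dots> = int ((pos r x t + 1) mod r)" using pos_int[OF assms] by (simp add: of_nat_mod add.commute)
  finally show ?thesis by simp
qed

lemma pos_minus1: assumes "r > 0" shows "pos r x (t - 1) = (pos r x t + r - 1) mod r"
proof -
  have "int (pos r x (t-1)) = (int x + t - 1) mod int r" using pos_int[OF assms] by (simp add: algebra_simps)
  also have "\<dots> = ((int x + t) mod int r - 1 + int r) mod int r" by (simp add: mod_diff_left_eq)
  also have "\<dots> = ((int x + t) mod int r + int r - 1) mod int r"
    by (metis (no_types, lifting) diff_add_eq mod_add_self2)
  also have "\<dots> = int ((pos r x t + r - 1) mod r)" using pos_int[OF assms] assms
    by (simp add: of_nat_mod of_nat_diff)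
  finally show ?thesis by simp
qed

lemma F_up: "(lo::int) \<le> 0 \<Longrightarrow> 0 \<le> hi \<Longrightarrow> lo \<le> e \<Longrightarrow> e \<le> hi \<Longrightarrow>
   2*(max hi (e+1) - lo) - \<bar>e+1\<bar> \<le> 2*(hi-lo) - \<bar>e\<bar> + 1"
  by arith
lemma F_down: "(lo::int) \<le> 0 \<Longrightarrow> 0 \<le> hi \<Longrightarrow> lo \<le> e \<Longrightarrow> e \<le> hi \<Longrightarrow>
   2*(hi - min lo (e-1)) - \<bar>e-1\<bar> \<le> 2*(hi-lo) - \<bar>e\<bar> + 1"
  by arith

lemma LB:
  assumes "(Gadj N r d ^^ k) (a0, x0) v" "x0 < r" "finite a0"
  shows "\<exists>lo hi e. lo \<le> 0 \<and> 0 \<le> hi \<and> lo \<le> e \<and> e \<le> hi \<and> snd v = pos r x0 e \<and>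
    finite (symdiff a0 (fst v)) \<and> symdiff a0 (fst v) \<subseteq> (\<Union>t\<in>{lo..hi}. Wd N d (pos r x0 t)) \<and>
    int (card (symdiff a0 (fst v))) + (2*(hi-lo) - \<bar>e\<bar>) \<le> int k"
  using assms(1)
proof (induction k arbitrary: v)
  case 0
  then have "v = (a0,x0)" by auto
  then show ?case using assms(2,3) pos_0[OF assms(2)]
    by (intro exI[of _ 0]) auto
next
  case (Suc k)
  from Suc.prems obtain w where w: "(Gadj N r d ^^ k) (a0,x0) w" and wv: "Gadj N r d w v"
    by (rule relpowp_Suc_E)
  from Suc.IH[OF w] obtain lo hi e where H: "lo \<le> 0" "0 \<le> hi" "lo \<le> e" "e \<le> hi" "snd w = pos r x0 e"
    "finite (symdiff a0 (fst w))" "symdiff a0 (fst w) \<subseteq> (\<Union>t\<in>{lo..hi}. Wd N d (pos r x0 t))"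
    "int (card (symdiff a0 (fst w))) + (2*(hi-lo) - \<bar>e\<bar>) \<le> int k" by blast
  have r0: "r > 0" using assms(2) by simp
  from wv have "(snd v = snd w \<and> (\<exists>c\<in>Wd N d (snd w). fst v = symdiff (fst w) {c})) \<or>
     (fst v = fst w \<and> snd v = (snd w+1) mod r) \<or> (fst v = fst w \<and> snd v = (snd w + r - 1) mod r)"
    unfolding Gadj_def by blast
  then show ?case
  proof (elim disjE conjE bexE)
    fix c assume 1: "snd v = snd w" "c \<in> Wd N d (snd w)" "fst v = symdiff (fst w) {c}"
    have sd: "symdiff a0 (fst v) = symdiff (symdiff a0 (fst w)) {c}" using 1 by (simp add: symdiff_assoc)
    have c: "c \<in> (\<Union>t\<in>{lo..hi}. Wd N d (pos r x0 t))" using 1 H by auto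
    have "card (symdiff a0 (fst v)) \<le> card (symdiff a0 (fst w)) + 1"
      unfolding sd by (rule card_symdiff_single[OF H(6)])
    moreover have "symdiff a0 (fst v) \<subseteq> (\<Union>t\<in>{lo..hi}. Wd N d (pos r x0 t))"
      using H(7) c unfolding sd by (auto simp: symdiff_def)
    moreover have "finite (symdiff a0 (fst v))" unfolding sd using H(6) by (simp add: symdiff_finite)
    ultimately show ?thesis using H 1 by (intro exI[of _ lo] exI[of _ hi] exI[of _ e]) auto
  next
    assume 1: "fst v = fst w" "snd v = (snd w+1) mod r"
    have p: "snd v = pos r x0 (e+1)" using 1 H(5) pos_plus1[OF r0] by simp
    have "(\<Union>t\<in>{lo..hi}. Wd N d (pos r x0 t)) \<subseteq> (\<Union>t\<in>{lo..max hi (e+1)}. Wd N d (pos r x0 t))"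
      by (rule UN_mono) auto
    then have cv: "symdiff a0 (fst v) \<subseteq> (\<Union>t\<in>{lo..max hi (e+1)}. Wd N d (pos r x0 t))"
      using H(7) 1 by auto
    have bd: "int (card (symdiff a0 (fst v))) + (2*(max hi (e+1)-lo) - \<bar>e+1\<bar>) \<le> int (Suc k)"
      using H(8) 1 F_up[OF H(1-4)] by simp
    have "lo \<le> 0 \<and> 0 \<le> max hi (e+1) \<and> lo \<le> e+1 \<and> e+1 \<le> max hi (e+1)" using H by auto
    moreover have "finite (symdiff a0 (fst v))" using H(6) 1 by simp
    ultimately show ?thesis using p cv bd by blast
  next
    assume 1: "fst v = fst w" "snd v = (snd w+r-1) mod r"
    have p: "snd v = pos r x0 (e-1)" using 1 H(5) pos_minus1[OF r0] by simp
    have "(\<Union>t\<in>{lo..hi}. Wd N d (pos r x0 t)) \<subseteq> (\<Union>t\<in>{min lo (e-1)..hi}. Wd N d (pos r x0 t))"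
      by (rule UN_mono) auto
    then have cv: "symdiff a0 (fst v) \<subseteq> (\<Union>t\<in>{min lo (e-1)..hi}. Wd N d (pos r x0 t))"
      using H(7) 1 by auto
    have bd: "int (card (symdiff a0 (fst v))) + (2*(hi - min lo (e-1)) - \<bar>e-1\<bar>) \<le> int (Suc k)"
      using H(8) 1 F_down[OF H(1-4)] by simp
    have "min lo (e-1) \<le> 0 \<and> 0 \<le> hi \<and> min lo (e-1) \<le> e-1 \<and> e-1 \<le> hi" using H by auto
    moreover have "finite (symdiff a0 (fst v))" using H(6) 1 by simp
    ultimately show ?thesis using p cv bd by blast
  qed
qed

lemma Wd_sub: "N > 0 \<Longrightarrow> Wd N d p \<subseteq> {0..<N}"
  unfolding Wd_def by auto

lemma Wd_finite: "finite (Wd N d p)"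
  unfolding Wd_def by auto

lemma FLIP:
  assumes "finite F" "F \<subseteq> Wd N d p" "p < r" "a \<subseteq> {0..<N}" "N > 0"
  shows "(Gadj N r d ^^ card F) (a,p) (symdiff a F, p)"
  using assms(1,2)
proof (induction F rule: finite_induct)
  case empty
  then show ?case by simp
next
  case (insert c F)
  have IH: "(Gadj N r d ^^ card F) (a,p) (symdiff a F, p)" using insert by auto
  have eq: "symdiff a (insert c F) = symdiff (symdiff a F) {c}"
    using insert(2) unfolding symdiff_def by auto
  have cW: "c \<in> Wd N d p" using insert by auto
  have "c \<in> {0..<N}" using cW Wd_sub[OF assms(5)] by blast
  then have sub: "F \<subseteq> {0..<N}" "c < N" using insert(4) Wd_sub[OF assms(5), of d p] by auto
  have "Gadj N r d (symdiff a F, p) (symdiff (symdiff a F) {c}, p)"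
    unfolding Gadj_def Gverts_def using sub assms(3,4) cW symdiff_single_neq[of "symdiff a F" c]
    by (auto simp: symdiff_def)
  then show ?case using IH eq insert(1,2) by (auto intro: relpowp_Suc_I)
qed

lemma succ_ne: "r \<ge> 2 \<Longrightarrow> p < r \<Longrightarrow> (p+1) mod r \<noteq> (p::nat)"
proof (cases "p + 1 < r")
  case False
  assume "r \<ge> 2" "p < r"
  then have "p + 1 = r" using False by simp
  then show ?thesis using \<open>r \<ge> 2\<close> by auto
qed auto

lemma pred_ne: "r \<ge> 2 \<Longrightarrow> p < r \<Longrightarrow> (p + r - 1) mod r \<noteq> (p::nat)"
proof (cases "p = 0")
  case True
  assume "r \<ge> 2" then show ?thesis using True by simp
next
  case False
  assume "r \<ge> 2" "p < r"
  then have "p + r - 1 = (p - 1) + r" using False by simp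
  then have "(p + r - 1) mod r = (p - 1) mod r" by simp
  also have "\<dots> = p - 1" using \<open>p < r\<close> by simp
  finally show ?thesis using False by simp
qed

lemma MOVE:
  assumes "r \<ge> 2" "a \<subseteq> {0..<N}" "s = 1 \<or> s = -1"
  shows "Gadj N r d (a, pos r x z) (a, pos r x (z+s))"
proof -
  have r0: "r > 0" using assms(1) by simp
  have pl: "pos r x z < r" by (rule pos_lt[OF r0])
  show ?thesis
  proof (cases "s = 1")
    case True
    then show ?thesis unfolding Gadj_def Gverts_def
      using pos_plus1[OF r0, of x z] succ_ne[OF assms(1) pl] pl assms(2) pos_lt[OF r0] r0 by auto
  next
    case False
    then have "s = -1" using assms(3) by simp
    then show ?thesis unfolding Gadj_def Gverts_def
      using pos_minus1[OF r0, of x z] pred_ne[OF assms(1) pl] pl assms(2) pos_lt[OF r0] r0 by auto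
  qed
qed

lemma SEG:
  assumes r2: "r \<ge> 2" and N0: "N > 0" and s: "s = 1 \<or> s = -1" and a: "a \<subseteq> {0..<N}"
  shows "S \<subseteq> (\<Union>t\<in>{0..int j}. Wd N d (pos r x (z + s*t))) \<Longrightarrow>
    (Gadj N r d ^^ (card S + j)) (a, pos r x z) (symdiff a S, pos r x (z + s * int j))"
proof (induction j arbitrary: S)
  case 0
  then have "S \<subseteq> Wd N d (pos r x z)" by simp
  moreover then have "finite S" using Wd_finite finite_subset by blast
  ultimately show ?case using FLIP[of S N d "pos r x z" r a] pos_lt[of r x z] r2 a N0 by simp
next
  case (Suc j)
  define U where "U = (\<Union>t\<in>{0..int j}. Wd N d (pos r x (z + s*t)))"
  define S1 where "S1 = S \<inter> U"
  define S2 where "S2 = S - U"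
  have ins: "{0..int (Suc j)} = insert (1 + int j) {0..int j}" by auto
  have S2W: "S2 \<subseteq> Wd N d (pos r x (z + s * int (Suc j)))"
    using Suc.prems unfolding S2_def U_def ins by auto
  have S1U: "S1 \<subseteq> U" unfolding S1_def by auto
  have Ssub: "S \<subseteq> {0..<N}" using Suc.prems Wd_sub[OF N0] by blast
  have finS: "finite S" using Ssub finite_subset by blast
  have IH: "(Gadj N r d ^^ (card S1 + j)) (a, pos r x z) (symdiff a S1, pos r x (z + s * int j))"
    using Suc.IH S1U unfolding U_def by blast
  have a1: "symdiff a S1 \<subseteq> {0..<N}" using a Ssub unfolding S1_def by (intro symdiff_sub) auto
  have mv: "Gadj N r d (symdiff a S1, pos r x (z + s * int j)) (symdiff a S1, pos r x (z + s * int j + s))"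
    by (rule MOVE[OF r2 a1 s])
  have eqp: "z + s * int j + s = z + s * int (Suc j)" by (simp add: algebra_simps)
  have fl: "(Gadj N r d ^^ card S2) (symdiff a S1, pos r x (z + s * int (Suc j)))
       (symdiff (symdiff a S1) S2, pos r x (z + s * int (Suc j)))"
    using FLIP[OF _ S2W pos_lt a1 N0] finS r2 unfolding S2_def by simp
  have "(Gadj N r d ^^ Suc (card S1 + j)) (a, pos r x z) (symdiff a S1, pos r x (z + s * int (Suc j)))"
    using relpowp_Suc_I[OF IH mv] eqp by simp
  from relpowp_trans[OF this fl]
  have "(Gadj N r d ^^ (Suc (card S1 + j) + card S2)) (a, pos r x z)
       (symdiff (symdiff a S1) S2, pos r x (z + s * int (Suc j)))" .
  moreover have "symdiff (symdiff a S1) S2 = symdiff a S"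
    unfolding S1_def S2_def symdiff_def by auto
  moreover have "card S = card S1 + card S2"
    unfolding S1_def S2_def using finS by (subst card_Un_disjoint[symmetric]) (auto intro: arg_cong[where f=card])
  ultimately show ?case by (simp add: add.commute add.left_commute)
qed

lemma UN_shift_up: "(\<Union>t\<in>{lo..hi}. f t) \<subseteq> (\<Union>t\<in>{0..int (nat (hi-lo))}. f (lo + 1*t))"
proof (rule subsetI)
  fix y assume "y \<in> (\<Union>t\<in>{lo..hi}. f (t::int))"
  then obtain t where "t\<in>{lo..hi}" "y \<in> f t" by blast
  then show "y \<in> (\<Union>t\<in>{0..int (nat (hi-lo))}. f (lo + 1*t))" by (intro UN_I[of "t - lo"]) auto
qed

lemma UN_shift_down: "(\<Union>t\<in>{lo..hi}. f t) \<subseteq> (\<Union>t\<in>{0..int (nat (hi-lo))}. f (hi + (-1)*t))"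
proof (rule subsetI)
  fix y assume "y \<in> (\<Union>t\<in>{lo..hi}. f (t::int))"
  then obtain t where "t\<in>{lo..hi}" "y \<in> f t" by blast
  then show "y \<in> (\<Union>t\<in>{0..int (nat (hi-lo))}. f (hi + (-1)*t))" by (intro UN_I[of "hi - t"]) auto
qed

lemma UB:
  assumes r2: "r \<ge> 2" and N0: "N > 0" and a: "a \<subseteq> {0..<N}" and x: "x < r" and S: "S \<subseteq> {0..<N}"
    and b: "lo \<le> 0" "0 \<le> hi" "lo \<le> e" "e \<le> hi"
    and cov: "S \<subseteq> (\<Union>t\<in>{lo..hi}. Wd N d (pos r x t))"
  shows "\<exists>k. int k \<le> int (card S) + (2*(hi-lo) - \<bar>e\<bar>) \<and> (Gadj N r d ^^ k) (a,x) (symdiff a S, pos r x e)"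
proof -
  have aS: "symdiff a S \<subseteq> {0..<N}" using a S by (rule symdiff_sub)
  show ?thesis
  proof (cases "e \<ge> 0")
    case True
    have s1: "(Gadj N r d ^^ nat(-lo)) (a,x) (a, pos r x lo)"
      using SEG[OF r2 N0 _ a, where s="-1" and S="{}" and j="nat(-lo)" and x=x and z=0 and d=d] b pos_0[OF x] by simp
    have c2: "S \<subseteq> (\<Union>t\<in>{0..int (nat (hi-lo))}. Wd N d (pos r x (lo + 1*t)))"
      using cov UN_shift_up[where lo=lo and hi=hi and f="\<lambda>t. Wd N d (pos r x t)"] by blast
    have s2: "(Gadj N r d ^^ (card S + nat(hi-lo))) (a, pos r x lo) (symdiff a S, pos r x hi)"
      using SEG[OF r2 N0 _ a, where s=1 and S=S and j="nat(hi-lo)" and x=x and z=lo and d=d] c2 b by simp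
    have s3: "(Gadj N r d ^^ nat(hi-e)) (symdiff a S, pos r x hi) (symdiff a S, pos r x e)"
      using SEG[OF r2 N0 _ aS, where s="-1" and S="{}" and j="nat(hi-e)" and x=x and z=hi and d=d] b by simp
    have "(Gadj N r d ^^ (nat(-lo) + (card S + nat(hi-lo)) + nat(hi-e))) (a,x) (symdiff a S, pos r x e)"
      by (rule relpowp_trans[OF relpowp_trans[OF s1 s2] s3])
    moreover have "int (nat(-lo) + (card S + nat(hi-lo)) + nat(hi-e)) \<le> int (card S) + (2*(hi-lo) - \<bar>e\<bar>)"
      using b True by simp
    ultimately show ?thesis by blast
  next
    case False
    have s1: "(Gadj N r d ^^ nat hi) (a,x) (a, pos r x hi)"
      using SEG[OF r2 N0 _ a, where s=1 and S="{}" and j="nat hi" and x=x and z=0 and d=d] b pos_0[OF x] by simp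
    have c2: "S \<subseteq> (\<Union>t\<in>{0..int (nat (hi-lo))}. Wd N d (pos r x (hi + (-1)*t)))"
      using cov UN_shift_down[where lo=lo and hi=hi and f="\<lambda>t. Wd N d (pos r x t)"] by blast
    have s2: "(Gadj N r d ^^ (card S + nat(hi-lo))) (a, pos r x hi) (symdiff a S, pos r x lo)"
      using SEG[OF r2 N0 _ a, where s="-1" and S=S and j="nat(hi-lo)" and x=x and z=hi and d=d] c2 b by simp
    have s3: "(Gadj N r d ^^ nat(e-lo)) (symdiff a S, pos r x lo) (symdiff a S, pos r x e)"
      using SEG[OF r2 N0 _ aS, where s=1 and S="{}" and j="nat(e-lo)" and x=x and z=lo and d=d] b by simp
    have "(Gadj N r d ^^ (nat hi + (card S + nat(hi-lo)) + nat(e-lo))) (a,x) (symdiff a S, pos r x e)"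
      by (rule relpowp_trans[OF relpowp_trans[OF s1 s2] s3])
    moreover have "int (nat hi + (card S + nat(hi-lo)) + nat(e-lo)) \<le> int (card S) + (2*(hi-lo) - \<bar>e\<bar>)"
      using b False by simp
    ultimately show ?thesis by blast
  qed
qed

theorem Gdiam:
  assumes r2: "r \<ge> 2" and N0: "N > 0"
  and up: "\<forall>x<r. \<forall>y<r. \<exists>lo hi e. lo \<le> 0 \<and> 0 \<le> hi \<and> lo \<le> e \<and> e \<le> hi \<and> pos r x e = y \<and>
     {0..<N} \<subseteq> (\<Union>t\<in>{lo..hi}. Wd N d (pos r x t)) \<and> 2*(hi-lo) - \<bar>e\<bar> \<le> int M"
  and x0: "x0 < r" and y0: "y0 < r"
  and low: "\<forall>lo hi e. lo \<le> 0 \<and> 0 \<le> hi \<and> lo \<le> e \<and> e \<le> hi \<and> pos r x0 e = y0 \<and>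
     {0..<N} \<subseteq> (\<Union>t\<in>{lo..hi}. Wd N d (pos r x0 t)) \<longrightarrow> int M \<le> 2*(hi-lo) - \<bar>e\<bar>"
  shows "gdiam (Gverts N r) (Gadj N r d) = enat (N + M)"
proof (rule diam_eq)
  show "\<forall>u\<in>Gverts N r. \<forall>v\<in>Gverts N r. \<exists>k\<le>N+M. (Gadj N r d ^^ k) u v"
  proof (intro ballI)
    fix u v assume "u \<in> Gverts N r" "v \<in> Gverts N r"
    then obtain a x b y where uv: "u = (a,x)" "v = (b,y)" "a \<subseteq> {0..<N}" "x<r" "b \<subseteq> {0..<N}" "y < r"
      by (auto simp: Gverts_def)
    from up[rule_format, OF uv(4) uv(6)] obtain lo hi e where H: "lo \<le> 0" "0 \<le> hi" "lo \<le> e" "e \<le> hi" "pos r x e = y"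
     "{0..<N} \<subseteq> (\<Union>t\<in>{lo..hi}. Wd N d (pos r x t))" "2*(hi-lo) - \<bar>e\<bar> \<le> int M" by blast
    define S where "S = symdiff a b"
    have S: "S \<subseteq> {0..<N}" unfolding S_def using uv by (intro symdiff_sub)
    then have cS: "card S \<le> N" using card_mono[of "{0..<N}" S] by simp
    have b: "symdiff a S = b" unfolding S_def by simp
    from UB[OF r2 N0 uv(3,4) S H(1-4) subset_trans[OF S H(6)]]
    obtain k where k: "int k \<le> int (card S) + (2*(hi-lo) - \<bar>e\<bar>)" "(Gadj N r d ^^ k) (a,x) (symdiff a S, pos r x e)"
      by blast
    have "k \<le> N + M" using k(1) cS H(7) by linarith
    then show "\<exists>k\<le>N+M. (Gadj N r d ^^ k) u v" using k(2) b H(5) uv by auto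
  qed
  show "({}, x0) \<in> Gverts N r" "({0..<N}, y0) \<in> Gverts N r" using x0 y0 by (auto simp: Gverts_def)
  show "\<forall>k<N+M. \<not> (Gadj N r d ^^ k) ({},x0) ({0..<N}, y0)"
  proof (intro allI impI notI)
    fix k assume k: "k < N + M" and p: "(Gadj N r d ^^ k) ({},x0) ({0..<N}, y0)"
    from LB[OF p x0] obtain lo hi e where H: "lo \<le> 0" "0 \<le> hi" "lo \<le> e" "e \<le> hi" "y0 = pos r x0 e"
      "{0..<N} \<subseteq> (\<Union>t\<in>{lo..hi}. Wd N d (pos r x0 t))"
      "int N + (2*(hi-lo) - \<bar>e\<bar>) \<le> int k" by (simp only: fst_conv snd_conv symdiff_empty card_atLeastLessThan diff_zero finite_atLeastLessThan) blast
    have "int M \<le> 2*(hi-lo) - \<bar>e\<bar>" using low H(1-6) by metis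
    then show False using H(7) k by linarith
  qed
qed



lemma ARC:
  assumes N0: "N > 0" and r0: "r > 0" and dv: "N dvd d * r"
    and big: "int N \<le> int d * (hi - lo + 1)"
  shows "{0..<N} \<subseteq> (\<Union>t\<in>{lo..hi}. Wd N d (pos r x t))"
proof
  fix b assume "b \<in> {0..<N}"
  then have bN: "b < N" by simp
  have d0: "d > 0" using big N0 by (cases d) auto
  obtain L where L: "d * r = N * L" using dv by blast
  define B where "B = int d * (int x + lo)"
  define m where "m = (int b - B) mod int N"
  define q where "q = m div int d"
  define j where "j = m mod int d"
  have m0: "0 \<le> m" "m < int N" unfolding m_def using N0 by auto
  have mqj: "m = int d * q + j" unfolding q_def j_def by simp
  have j0: "0 \<le> j" "j < int d" unfolding j_def using d0 by auto
  have q0: "0 \<le> q" unfolding q_def using m0 d0 by (simp add: pos_imp_zdiv_nonneg_iff)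
  have qle: "q \<le> hi - lo"
  proof (rule ccontr)
    assume "\<not> q \<le> hi - lo"
    then have "hi - lo + 1 \<le> q" by simp
    then have "int d * (hi - lo + 1) \<le> int d * q" using d0 by (intro mult_left_mono) auto
    then show False using mqj j0 m0 big by linarith
  qed
  define t where "t = lo + q"
  have t: "t \<in> {lo..hi}" unfolding t_def using q0 qle by simp
  define i where "i = nat j + 1"
  have i: "i \<in> {1..d}" unfolding i_def using j0 by auto
  define p where "p = pos r x t"
  have pI: "int p = (int x + t) mod int r" unfolding p_def by (rule pos_int[OF r0])
  define K where "K = (int x + t) div int r"
  have pK: "int p = int x + t - int r * K" unfolding pI K_def by (simp add: minus_div_mult_eq_mod[symmetric] algebra_simps)
  have "int ((i + d * p + N - 1) mod N) = (int i + int d * int p + int N - 1) mod int N"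
    using N0 by (simp add: of_nat_mod of_nat_diff)
  also have "\<dots> = (j + int d * int p + int N * 1) mod int N" unfolding i_def using j0 by (simp add: algebra_simps)
  also have "\<dots> = (j + int d * int p) mod int N" by (simp only: mod_mult_self2)
  also have "j + int d * int p = (m + B) + int N * (- (int L * K))"
    unfolding pK mqj B_def t_def using L
    by (simp add: algebra_simps flip: of_nat_mult)
  also have "(m + B + int N * (- (int L * K))) mod int N = (m + B) mod int N"
    by (simp only: mod_mult_self2)
  also have "(m + B) mod int N = (int b - B + B) mod int N" unfolding m_def by (simp add: mod_add_left_eq)
  also have "\<dots> = int b" using bN by simp
  finally have "(i + d * p + N - 1) mod N = b" by simp
  then have "b \<in> Wd N d (pos r x t)" unfolding Wd_def p_def using i by force
  then show "b \<in> (\<Union>t\<in>{lo..hi}. Wd N d (pos r x t))" using t by blast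
qed

lemma CNT:
  assumes cov: "{0..<N} \<subseteq> (\<Union>t\<in>{lo..hi}. Wd N d (g t))" and le: "lo \<le> hi"
  shows "int N \<le> int d * (hi - lo + 1)"
proof -
  have "N = card {0..<N}" by simp
  also have "\<dots> \<le> card (\<Union>t\<in>{lo..hi}. Wd N d (g t))" using cov by (intro card_mono) (auto simp: Wd_finite)
  also have "\<dots> \<le> (\<Sum>t\<in>{lo..hi}. card (Wd N d (g t)))" by (rule card_UN_le) simp
  also have "\<dots> \<le> (\<Sum>t\<in>{lo..hi}. d)"
  proof (rule sum_mono)
    fix t show "card (Wd N d (g t)) \<le> d" unfolding Wd_def using card_image_le[of "{1..d}"] by fastforce
  qed
  also have "\<dots> = d * nat (hi - lo + 1)" by simp
  finally have "int N \<le> int (d * nat (hi - lo + 1))" by (simp only: of_nat_le_iff)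
  then show ?thesis using le by simp
qed



lemma pos_decomp: assumes "r > 0" "pos r x e = y" shows "\<exists>K. int x + e = int y + int r * K"
proof -
  have "int y = (int x + e) mod int r" using assms pos_int by metis
  then show ?thesis by (metis div_mult_mod_eq add.commute mult.commute)
qed

lemma K_cases: "(r::int) \<ge> 0 \<Longrightarrow> K = 0 \<or> K = -1 \<or> r * K \<ge> r \<or> r * K \<le> -2 * r"
proof -
  assume r: "r \<ge> 0"
  consider "K = 0" | "K = -1" | "K \<ge> 1" | "K \<le> -2" by linarith
  then show ?thesis
  proof cases
    case 3 then have "r * 1 \<le> r * K" using r by (intro mult_left_mono) auto
    then show ?thesis by simp
  next
    case 4 then have "r * K \<le> r * (-2)" using r by (intro mult_left_mono) auto
    then show ?thesis by simp
  qed auto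
qed

lemma Qadj_eq: "Qadj n d n = Gadj n n d"
  unfolding Qadj_def Gadj_def Qverts_def Gverts_def Wd_def unitv_def
  by (intro ext) (auto simp: add.assoc)

lemma Qverts_eq: "Qverts n n = Gverts n n"
  unfolding Qverts_def Gverts_def by simp

lemma ceil_facts:
  fixes n d :: nat
  assumes "d \<ge> 1"
  shows "n \<le> d * ((n + d - 1) div d)" "d * ((n + d - 1) div d) \<le> n + d - 1"
proof -
  have "(n + d - 1) = d * ((n + d - 1) div d) + (n + d - 1) mod d" by simp
  moreover have "(n + d - 1) mod d < d" using assms by simp
  ultimately show "n \<le> d * ((n + d - 1) div d)" by linarith
  show "d * ((n + d - 1) div d) \<le> n + d - 1" by (rule times_div_less_eq_dividend)
qed

lemma ceil_min:
  fixes n d z :: nat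
  assumes "d \<ge> 1" "n \<le> d * z"
  shows "(n + d - 1) div d \<le> z"
proof -
  have "(n + d - 1) div d \<le> (d * z + (d - 1)) div d" using assms by (intro div_le_mono) simp
  also have "\<dots> = z + (d - 1) div d" using assms(1) by (subst div_mult_self4) auto
  also have "\<dots> = z" using assms(1) by simp
  finally show ?thesis .
qed



lemma pos_k: assumes "n > 0" "y < n" shows "pos n x ((int y - int x) mod int n) = y"
  "pos n x ((int y - int x) mod int n - int n) = y"
proof -
  have "(int x + (int y - int x) mod int n) mod int n = int y" using assms by (simp add: mod_add_right_eq)
  then show "pos n x ((int y - int x) mod int n) = y" unfolding pos_def by simp
  have "(int x + ((int y - int x) mod int n - int n)) mod int n = (int x + (int y - int x) mod int n + int n * (-1)) mod int n"
    by (simp add: algebra_simps)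
  also have "\<dots> = (int x + (int y - int x) mod int n) mod int n" by (simp only: mod_mult_self2)
  also have "\<dots> = int y" using assms by (simp add: mod_add_right_eq)
  finally show "pos n x ((int y - int x) mod int n - int n) = y" unfolding pos_def by simp
qed

lemma cover_mono: "int n \<le> int d * int c \<Longrightarrow> int c \<le> hi - lo + 1 \<Longrightarrow> int n \<le> int d * (hi - lo + 1)"
  by (meson mult_left_mono of_nat_0_le_iff order_trans)

theorem Qthm:
  assumes d2: "2 \<le> d" and dn: "d \<le> n" and n3: "3 \<le> n"
  shows "gdiam (Qverts n n) (Qadj n d n) = enat (n + max (n div 2) (2 * ((n + d - 1) div d) - 2))"
proof -
  define c where "c = (n + d - 1) div d"
  define M where "M = max (n div 2) (2*c - 2)"
  have cf: "n \<le> d*c" "d*c \<le> n + d - 1" unfolding c_def using ceil_facts d2 by auto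
  have c1: "c \<ge> 1" using cf n3 by (cases c) auto
  have "2*(c-1) \<le> d*(c-1)" using d2 by (intro mult_right_mono) auto
  moreover have "d*(c-1) = d*c - d" by (simp add: diff_mult_distrib2)
  ultimately have c2: "2*c - 2 \<le> n - 1" using cf d2 c1 by linarith
  have n0: "n > 0" using n3 by simp
  have dv: "n dvd d * n" by simp
  have cfi: "int n \<le> int d * int c" using cf(1) by (simp flip: of_nat_mult)
  have h2: "int n \<le> 2 * int (n div 2) + 1" by linarith
  have up: "\<forall>x<n. \<forall>y<n. \<exists>lo hi e. lo \<le> 0 \<and> 0 \<le> hi \<and> lo \<le> e \<and> e \<le> hi \<and> pos n x e = y \<and>
     {0..<n} \<subseteq> (\<Union>t\<in>{lo..hi}. Wd n d (pos n x t)) \<and> 2*(hi-lo) - \<bar>e\<bar> \<le> int M"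
  proof (intro allI impI)
    fix x y assume xy: "x < n" "y < n"
    define k where "k = (int y - int x) mod int n"
    have k: "0 \<le> k" "k < int n" unfolding k_def using n0 by auto
    define e where "e = (if k \<le> int (n div 2) then k else k - int n)"
    have pe: "pos n x e = y" unfolding e_def k_def using pos_k[OF n0 xy(2)] by simp
    have ae: "\<bar>e\<bar> \<le> int (n div 2)" unfolding e_def using k h2 by auto
    define lo where "lo = (if e \<ge> 0 then min 0 (e - (int c - 1)) else e)"
    define hi where "hi = (if e \<ge> 0 then e else max 0 (e + int c - 1))"
    have b: "lo \<le> 0" "0 \<le> hi" "lo \<le> e" "e \<le> hi" "int c \<le> hi - lo + 1"
      unfolding lo_def hi_def by auto
    have cov: "{0..<n} \<subseteq> (\<Union>t\<in>{lo..hi}. Wd n d (pos n x t))"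
      by (rule ARC[OF n0 n0 dv cover_mono[OF cfi b(5)]])
    have Mi: "int M = max (int (n div 2)) (2*int c - 2)" unfolding M_def using c1 by (simp add: of_nat_diff)
    have "2*(hi-lo) - \<bar>e\<bar> \<le> int M"
    proof (cases "e \<ge> 0")
      case True
      then have "lo = min 0 (e - (int c - 1))" "hi = e" unfolding lo_def hi_def by auto
      then show ?thesis unfolding Mi using ae True by (simp add: min_def max_def)
    next
      case False
      then have "lo = e" "hi = max 0 (e + int c - 1)" unfolding lo_def hi_def by auto
      then show ?thesis unfolding Mi using ae False by (simp add: min_def max_def)
    qed
    then show "\<exists>lo hi e. lo \<le> 0 \<and> 0 \<le> hi \<and> lo \<le> e \<and> e \<le> hi \<and> pos n x e = y \<and>
     {0..<n} \<subseteq> (\<Union>t\<in>{lo..hi}. Wd n d (pos n x t)) \<and> 2*(hi-lo) - \<bar>e\<bar> \<le> int M"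
      using b pe cov by blast
  qed
  have main: "gdiam (Gverts n n) (Gadj n n d) = enat (n + M)"
  proof (cases "2*c - 2 \<le> n div 2")
    case True
    then have MM: "M = n div 2" unfolding M_def by simp
    show ?thesis
    proof (rule Gdiam[OF _ n0 up, of 0 "n div 2"])
      show "2 \<le> n" "0 < n" "n div 2 < n" using n3 by auto
      show "\<forall>lo hi e. lo \<le> 0 \<and> 0 \<le> hi \<and> lo \<le> e \<and> e \<le> hi \<and> pos n 0 e = n div 2 \<and>
        {0..<n} \<subseteq> (\<Union>t\<in>{lo..hi}. Wd n d (pos n 0 t)) \<longrightarrow> int M \<le> 2 * (hi - lo) - \<bar>e\<bar>"
      proof (intro allI impI, elim conjE)
        fix lo hi e assume H: "lo \<le> 0" "0 \<le> hi" "lo \<le> e" "e \<le> hi" "pos n 0 e = n div 2"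
        obtain K where K: "int 0 + e = int (n div 2) + int n * K" using pos_decomp[OF n0 H(5)] by blast
        have "K = 0 \<or> K = -1 \<or> int n * K \<ge> int n \<or> int n * K \<le> -2 * int n" by (rule K_cases) simp
        then have "\<bar>e\<bar> \<ge> int (n div 2)" using K h2 by auto
        then show "int M \<le> 2 * (hi - lo) - \<bar>e\<bar>" unfolding MM using H by auto
      qed
    qed
  next
    case False
    then have MM: "M = 2*c - 2" unfolding M_def by simp
    show ?thesis
    proof (rule Gdiam[OF _ n0 up, of 0 0])
      show "2 \<le> n" "0 < n" "0 < n" using n3 by auto
      show "\<forall>lo hi e. lo \<le> 0 \<and> 0 \<le> hi \<and> lo \<le> e \<and> e \<le> hi \<and> pos n 0 e = 0 \<and>
        {0..<n} \<subseteq> (\<Union>t\<in>{lo..hi}. Wd n d (pos n 0 t)) \<longrightarrow> int M \<le> 2 * (hi - lo) - \<bar>e\<bar>"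
      proof (intro allI impI, elim conjE)
        fix lo hi e assume H: "lo \<le> 0" "0 \<le> hi" "lo \<le> e" "e \<le> hi" "pos n 0 e = 0"
          "{0..<n} \<subseteq> (\<Union>t\<in>{lo..hi}. Wd n d (pos n 0 t))"
        have "int n \<le> int d * (hi - lo + 1)" using CNT[OF H(6)] H by simp
        moreover have "int (d * nat (hi - lo + 1)) = int d * (hi - lo + 1)" using H by simp
        ultimately have "int n \<le> int (d * nat (hi - lo + 1))" by linarith
        then have "n \<le> d * nat (hi - lo + 1)" by (simp only: of_nat_le_iff)
        then have "c \<le> nat (hi - lo + 1)" unfolding c_def using ceil_min d2 by simp
        then have cl: "int c \<le> hi - lo + 1" using H by linarith
        obtain K where K: "int 0 + e = int 0 + int n * K" using pos_decomp[OF n0 H(5)] by blast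
        have "K = 0 \<or> K = -1 \<or> int n * K \<ge> int n \<or> int n * K \<le> -2 * int n" by (rule K_cases) simp
        then have "e = 0 \<or> \<bar>e\<bar> \<ge> int n" using K by auto
        then show "int M \<le> 2 * (hi - lo) - \<bar>e\<bar>" unfolding MM using H cl c2 c1 by (auto simp: of_nat_diff)
      qed
    qed
  qed
  then show ?thesis unfolding Qverts_eq Qadj_eq M_def c_def .
qed



definition sh :: "nat \<Rightarrow> int \<Rightarrow> nat set \<Rightarrow> nat set" where
  "sh m z a = (\<lambda>i. nat ((int i + z) mod int m)) ` a"

lemma shiftv_sh: "m > 0 \<Longrightarrow> shiftv m j a = sh m (int j) a"
  unfolding shiftv_def sh_def by (intro image_cong) (auto simp: nat_mod_distrib nat_add_distrib)

lemma sh_add: "m > 0 \<Longrightarrow> sh m z (sh m w a) = sh m (w + z) a"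
  unfolding sh_def image_image by (intro image_cong) (auto simp: mod_add_left_eq add.assoc)

lemma sh_cong: assumes "z mod int m = w mod int m" shows "sh m z a = sh m w a"
  unfolding sh_def
proof (intro image_cong refl)
  fix i
  have "(int i + z) mod int m = (int i + z mod int m) mod int m" by (simp add: mod_add_right_eq)
  also have "\<dots> = (int i + w mod int m) mod int m" using assms by simp
  also have "\<dots> = (int i + w) mod int m" by (simp add: mod_add_right_eq)
  finally show "nat ((int i + z) mod int m) = nat ((int i + w) mod int m)" by simp
qed

lemma sh_0: "a \<subseteq> {0..<m} \<Longrightarrow> sh m 0 a = a"
proof -
  assume "a \<subseteq> {0..<m}"
  then have "\<And>i. i \<in> a \<Longrightarrow> nat ((int i + 0) mod int m) = i" by auto
  then show ?thesis unfolding sh_def by simp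
qed

lemma sh_sub: "m > 0 \<Longrightarrow> sh m z a \<subseteq> {0..<m}"
  unfolding sh_def by (auto simp: nat_less_iff)

lemma sh_inv: "m > 0 \<Longrightarrow> a \<subseteq> {0..<m} \<Longrightarrow> sh m (-z) (sh m z a) = a"
  by (simp add: sh_add sh_0)

lemma sh_inj: "m > 0 \<Longrightarrow> a \<subseteq> {0..<m} \<Longrightarrow> b \<subseteq> {0..<m} \<Longrightarrow> sh m z a = sh m z b \<Longrightarrow> a = b"
proof -
  assume m: "m > 0" and ab: "a \<subseteq> {0..<m}" "b \<subseteq> {0..<m}" and eq: "sh m z a = sh m z b"
  have "sh m (-z) (sh m z a) = sh m (-z) (sh m z b)" using eq by simp
  then show "a = b" using sh_inv[OF m ab(1)] sh_inv[OF m ab(2)] by simp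
qed

lemma sh_inj_on: "m > 0 \<Longrightarrow> inj_on (\<lambda>i. nat ((int i + z) mod int m)) {0..<m}"
proof (rule inj_onI)
  fix i j assume m: "m > 0" and ij: "i \<in> {0..<m}" "j \<in> {0..<m}"
    and eq: "nat ((int i + z) mod int m) = nat ((int j + z) mod int m)"
  have "int (nat ((int i + z) mod int m)) = (int i + z) mod int m"
    "int (nat ((int j + z) mod int m)) = (int j + z) mod int m" using m by simp_all
  moreover have "int (nat ((int i + z) mod int m)) = int (nat ((int j + z) mod int m))" using eq by simp
  ultimately have "(int i + z) mod int m = (int j + z) mod int m" by simp
  then have "(int i + z + (-z)) mod int m = (int j + z + (-z)) mod int m"
    using mod_add_left_eq[of "int i + z" "int m" "-z"] mod_add_left_eq[of "int j + z" "int m" "-z"] by simp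
  then show "i = j" using ij by simp
qed

lemma sh_symdiff: "m > 0 \<Longrightarrow> a \<subseteq> {0..<m} \<Longrightarrow> b \<subseteq> {0..<m} \<Longrightarrow>
    sh m z (symdiff a b) = symdiff (sh m z a) (sh m z b)"
proof -
  assume m: "m > 0" and ab: "a \<subseteq> {0..<m}" "b \<subseteq> {0..<m}"
  define f where "f = (\<lambda>i. nat ((int i + z) mod int m))"
  have inj: "inj_on f (a \<union> b)"
    unfolding f_def using ab by (intro inj_on_subset[OF sh_inj_on[OF m, of z]]) auto
  have 1: "f ` (a - b) = f ` a - f ` b" by (rule inj_on_image_set_diff[OF inj]) auto
  have 2: "f ` (b - a) = f ` b - f ` a" by (rule inj_on_image_set_diff[OF inj]) auto
  have "sh m z (symdiff a b) = f ` (a - b) \<union> f ` (b - a)" unfolding sh_def symdiff_def f_def by (rule image_Un)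
  also have "\<dots> = (f ` a - f ` b) \<union> (f ` b - f ` a)" using 1 2 by simp
  also have "\<dots> = symdiff (sh m z a) (sh m z b)" unfolding symdiff_def sh_def f_def by (rule refl)
  finally show ?thesis .
qed

lemma sh_single: "sh m z {c} = {nat ((int c + z) mod int m)}"
  unfolding sh_def by simp


lemma xpn: "(x::nat) < r \<Longrightarrow> (r - x) mod r = (if x = 0 then 0 else r - x)"
  by auto

lemma mod2: "(z::nat) < 2*r \<Longrightarrow> z mod r = (if z < r then z else z - r)"
proof (cases "z < r")
  case False
  assume "z < 2*r"
  then have "z - r < r" by simp
  then show ?thesis using False by (simp add: le_mod_geq)
qed simp

lemma ring_facts:
  fixes x y r :: nat
  assumes "x < r" "y < r" "r \<ge> 3"
  shows "((r - x) mod r + y) mod r = 0 \<longleftrightarrow> x = y"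
    "x = y \<longleftrightarrow> (r - y) mod r = (r - x) mod r"
    "((r - x) mod r + y) mod r = 1 \<longleftrightarrow> (r - y) mod r = ((r - x) mod r + r - 1) mod r"
    "((r - x) mod r + y) mod r = r - 1 \<longleftrightarrow> (r - y) mod r = ((r - x) mod r + 1) mod r"
  using assms by (simp_all add: xpn mod2 split: if_split_asm if_split, (arith+)?)


definition psi :: "nat \<Rightarrow> nat \<Rightarrow> nat set \<times> nat \<Rightarrow> nat set \<times> nat" where
  "psi d r u = (sh (d*r) (int d * int ((r - snd u) mod r)) (fst u), (r - snd u) mod r)"

lemma symdiff_empty_iff: "symdiff P b = {} \<longleftrightarrow> b = P" unfolding symdiff_def by auto

lemma sh_unit:
  assumes m: "m > 0" and i: "i \<ge> 1"
  shows "sh m (int d * int X) {(i + m - 1) mod m} = {(i + d*X + m - 1) mod m}"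
proof -
  have "int ((i + m - 1) mod m) = (int i + int m - 1) mod int m" using i by (simp add: of_nat_mod of_nat_diff)
  then have "(int ((i + m - 1) mod m) + int d * int X) mod int m = (int i + int m - 1 + int d * int X) mod int m"
    by (simp add: mod_add_left_eq)
  also have "\<dots> = int ((i + d*X + m - 1) mod m)" using i by (simp add: of_nat_mod of_nat_diff algebra_simps)
  finally show ?thesis unfolding sh_single by simp
qed

lemma COR_iff:
  assumes d1: "d \<ge> 1" and r3: "r \<ge> 3" and u: "u \<in> Gverts (d*r) r" and v: "v \<in> Gverts (d*r) r"
  shows "CORadj d r u v \<longleftrightarrow> Gadj (d*r) r d (psi d r u) (psi d r v)"
proof -
  define m where "m = d * r"
  have m0: "m > 0" unfolding m_def using d1 r3 by simp
  obtain a x where ax: "u = (a,x)" "a \<subseteq> {0..<m}" "x < r" using u unfolding Gverts_def m_def by auto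
  obtain b y where bv: "v = (b,y)" "b \<subseteq> {0..<m}" "y < r" using v unfolding Gverts_def m_def by auto
  define X where "X = (r - x) mod r"
  define Y where "Y = (r - y) mod r"
  have XY: "X < r" "Y < r" unfolding X_def Y_def using r3 by auto
  define P where "P = sh m (int d * (int y + int X)) a"
  define A where "A = sh m (int d * int X) a"
  define B where "B = sh m (int d * int Y) b"
  have Psub: "P \<subseteq> {0..<m}" unfolding P_def by (rule sh_sub[OF m0])
  have Asub: "A \<subseteq> {0..<m}" unfolding A_def by (rule sh_sub[OF m0])
  have Bsub: "B \<subseteq> {0..<m}" unfolding B_def by (rule sh_sub[OF m0])
  have pu: "psi d r u = (A, X)" unfolding psi_def A_def X_def m_def ax by simp
  have pv: "psi d r v = (B, Y)" unfolding psi_def B_def Y_def m_def bv by simp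
  have inv: "cor_mult d r (cor_inv d r u) v = (symdiff P b, (X + y) mod r)"
  proof -
    have "shiftv (d * r) (d * y) (shiftv (d * r) (d * X) a) = sh m (int (d*X) + int (d*y)) a"
      unfolding m_def[symmetric] using m0 by (simp add: shiftv_sh sh_add)
    also have "\<dots> = P" unfolding P_def by (simp add: algebra_simps)
    finally show ?thesis unfolding cor_mult_def cor_inv_def ax bv X_def by simp
  qed
  have conn: "\<And>S t. (S, t) \<in> cor_conn d r \<longleftrightarrow> (S = {} \<and> (t = 1 \<or> t = r - 1)) \<or> (t = 0 \<and> (\<exists>i\<in>{1..d}. S = unitv m i))"
    unfolding cor_conn_def m_def by auto
  have key: "sh m (int d * int Y) P = A"
  proof -
    have "sh m (int d * int Y) P = sh m (int d * (int y + int X) + int d * int Y) a"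
      unfolding P_def by (rule sh_add[OF m0])
    also have "\<dots> = A" unfolding A_def
    proof (rule sh_cong)
      show "(int d * (int y + int X) + int d * int Y) mod int m = (int d * int X) mod int m"
      proof (cases "y = 0")
        case True then show ?thesis unfolding Y_def by simp
      next
        case False
        then have "int Y = int r - int y" unfolding Y_def using bv(3) by (simp add: xpn of_nat_diff)
        then have e: "int Y + int y = int r" by simp
        have "int d * (int y + int X) + int d * int Y = int d * int X + int d * (int Y + int y)"
          by (simp add: algebra_simps)
        also have "\<dots> = int d * int X + int m * 1" unfolding e m_def by simp
        finally have "int d * (int y + int X) + int d * int Y = int d * int X + int m * 1" .
        then show ?thesis by (simp only: mod_mult_self2)
      qed
    qed
    finally show ?thesis .
  qed
  have RF: "((X + y) mod r = 0) = (x = y)" "(x = y) = (Y = X)"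
     "((X + y) mod r = 1) = (Y = (X + r - 1) mod r)" "((X + y) mod r = r - 1) = (Y = (X + 1) mod r)"
    unfolding X_def Y_def using ring_facts[OF ax(3) bv(3) r3] by simp_all
  have r1: "(1::nat) \<noteq> 0" "r - 1 \<noteq> 0" "r - 1 \<noteq> 1" using r3 by auto
  have Wd_iff: "\<And>c. c \<in> Wd m d X \<longleftrightarrow> (\<exists>i\<in>{1..d}. c = (i + d*X + m - 1) mod m)"
    unfolding Wd_def by auto
  have unit: "\<And>i. unitv m i = {(i + m - 1) mod m}" unfolding unitv_def by simp
  show ?thesis
  proof
    assume "CORadj d r u v"
    then have C: "(symdiff P b, (X + y) mod r) \<in> cor_conn d r" unfolding CORadj_def inv by simp
    show "Gadj (d*r) r d (psi d r u) (psi d r v)"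
    proof -
      from C consider (mv) "symdiff P b = {}" "(X + y) mod r = 1 \<or> (X + y) mod r = r - 1"
        | (fl) i where "(X + y) mod r = 0" "i \<in> {1..d}" "symdiff P b = unitv m i"
        unfolding conn by (elim disjE conjE bexE) auto
      then show ?thesis
      proof cases
        case mv
        then have "b = P" by (simp add: symdiff_empty_iff)
        then have "B = A" unfolding B_def using key by simp
        moreover have "Y \<noteq> X" using mv RF r1 by auto
        moreover have "Y = (X + 1) mod r \<or> Y = (X + r - 1) mod r" using mv RF by auto
        ultimately show ?thesis unfolding pu pv Gadj_def Gverts_def m_def[symmetric]
          using Asub XY by auto
      next
        case fl
        then have YX: "Y = X" using RF by simp
        have i1: "i \<ge> 1" using fl by simp
        have "b = symdiff P {(i + m - 1) mod m}" using fl(3) unfolding unit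
          by (metis symdiff_cancel)
        then have "B = symdiff A {(i + d*X + m - 1) mod m}"
          unfolding B_def YX using Psub m0 key YX sh_unit[OF m0 i1, of d X]
          by (simp add: sh_symdiff)
        moreover have "(i + d*X + m - 1) mod m \<in> Wd m d X" using Wd_iff fl by blast
        moreover have "B \<noteq> A" using calculation(1) symdiff_single_neq by blast
        ultimately show ?thesis unfolding pu pv Gadj_def Gverts_def m_def[symmetric]
          using Asub Bsub XY YX by auto
      qed
    qed
  next
    assume G: "Gadj (d*r) r d (psi d r u) (psi d r v)"
    have C: "(symdiff P b, (X + y) mod r) \<in> cor_conn d r"
    proof -
      from G have G': "(Y = X \<and> (\<exists>c\<in>Wd m d X. B = symdiff A {c})) \<or> (B = A \<and> (Y = (X + 1) mod r \<or> Y = (X + r - 1) mod r))"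
        unfolding pu pv Gadj_def m_def by simp
      then show ?thesis
      proof
        assume "Y = X \<and> (\<exists>c\<in>Wd m d X. B = symdiff A {c})"
        then obtain c where YX: "Y = X" and c: "c \<in> Wd m d X" and Bc: "B = symdiff A {c}" by blast
        obtain i where i: "i \<in> {1..d}" "c = (i + d*X + m - 1) mod m" using c Wd_iff by blast
        have i1: "i \<ge> 1" using i by simp
        have "sh m (int d * int Y) b = sh m (int d * int Y) (symdiff P {(i + m - 1) mod m})"
          using Bc unfolding B_def i(2) YX using Psub m0 key YX sh_unit[OF m0 i1, of d X]
          by (simp add: sh_symdiff)
        then have "b = symdiff P {(i + m - 1) mod m}"
          using sh_inj[OF m0 bv(2)] symdiff_sub[OF Psub, of "{(i + m - 1) mod m}"] m0 by auto
        then have "symdiff P b = unitv m i" unfolding unit by simp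
        moreover have "(X + y) mod r = 0" using YX RF by simp
        ultimately show ?thesis unfolding conn using i by blast
      next
        assume "B = A \<and> (Y = (X + 1) mod r \<or> Y = (X + r - 1) mod r)"
        then have BA: "B = A" and mv: "Y = (X + 1) mod r \<or> Y = (X + r - 1) mod r" by blast+
        have "sh m (int d * int Y) b = sh m (int d * int Y) P" using BA key unfolding B_def by simp
        then have "b = P" using sh_inj[OF m0 bv(2) Psub] by blast
        then have "symdiff P b = {}" by simp
        moreover have "(X + y) mod r = 1 \<or> (X + y) mod r = r - 1" using mv RF by auto
        ultimately show ?thesis unfolding conn by blast
      qed
    qed
    show "CORadj d r u v" unfolding CORadj_def inv using C u v by (simp add: CORverts_def Gverts_def)
  qed
qed



lemma iso_pow:
  assumes EV: "\<And>u v. E u v \<Longrightarrow> u \<in> V \<and> v \<in> V" and E'V: "\<And>u v. E' u v \<Longrightarrow> u \<in> V \<and> v \<in> V"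
    and fV: "\<And>u. u \<in> V \<Longrightarrow> f u \<in> V" and ff: "\<And>u. u \<in> V \<Longrightarrow> f (f u) = u"
    and iff: "\<And>u v. u \<in> V \<Longrightarrow> v \<in> V \<Longrightarrow> E u v \<longleftrightarrow> E' (f u) (f v)"
  shows "u \<in> V \<Longrightarrow> v \<in> V \<Longrightarrow> (E ^^ k) u v \<longleftrightarrow> (E' ^^ k) (f u) (f v)"
proof (induction k arbitrary: v)
  case 0
  then show ?case using ff by (metis relpowp.simps(1))
next
  case (Suc k)
  show ?case
  proof
    assume "(E ^^ Suc k) u v"
    then obtain w where w: "(E ^^ k) u w" "E w v" by (rule relpowp_Suc_E)
    then have wV: "w \<in> V" using EV by blast
    have "(E' ^^ k) (f u) (f w)" using Suc.IH[OF Suc.prems(1) wV] w(1) by blast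
    moreover have "E' (f w) (f v)" using iff[OF wV Suc.prems(2)] w(2) by blast
    ultimately show "(E' ^^ Suc k) (f u) (f v)" by (rule relpowp_Suc_I)
  next
    assume "(E' ^^ Suc k) (f u) (f v)"
    then obtain w' where w': "(E' ^^ k) (f u) w'" "E' w' (f v)" by (rule relpowp_Suc_E)
    then have wV: "w' \<in> V" using E'V by blast
    define w where "w = f w'"
    have wV2: "w \<in> V" unfolding w_def using fV wV by blast
    have fw: "f w = w'" unfolding w_def using ff wV by blast
    have "(E ^^ k) u w" using Suc.IH[OF Suc.prems(1) wV2] w'(1) fw by simp
    moreover have "E w v" using iff[OF wV2 Suc.prems(2)] w'(2) fw by simp
    ultimately show "(E ^^ Suc k) u v" by (rule relpowp_Suc_I)
  qed
qed

lemma gdiam_iso: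
  assumes EV: "\<And>u v. E u v \<Longrightarrow> u \<in> V \<and> v \<in> V" and E'V: "\<And>u v. E' u v \<Longrightarrow> u \<in> V \<and> v \<in> V"
    and fV: "\<And>u. u \<in> V \<Longrightarrow> f u \<in> V" and ff: "\<And>u. u \<in> V \<Longrightarrow> f (f u) = u"
    and iff: "\<And>u v. u \<in> V \<Longrightarrow> v \<in> V \<Longrightarrow> E u v \<longleftrightarrow> E' (f u) (f v)"
  shows "gdiam V E = gdiam V E'"
proof -
  have gd: "\<And>u v. u \<in> V \<Longrightarrow> v \<in> V \<Longrightarrow> gdist E u v = gdist E' (f u) (f v)"
  proof -
    fix u v assume uv: "u \<in> V" "v \<in> V"
    have "\<And>k. (E ^^ k) u v \<longleftrightarrow> (E' ^^ k) (f u) (f v)"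
      by (rule iso_pow[where E=E and E'=E' and f=f and V=V and u=u and v=v, OF EV E'V fV ff iff uv])
    then show "gdist E u v = gdist E' (f u) (f v)" unfolding gdist_def by simp
  qed
  have "gdiam V E \<le> gdiam V E'" unfolding gdiam_def
  proof (rule SUP_least)
    fix p assume p: "p \<in> V \<times> V"
    then have "gdist E (fst p) (snd p) = gdist E' (f (fst p)) (f (snd p))" using gd by auto
    also have "\<dots> \<le> (SUP p\<in>V \<times> V. gdist E' (fst p) (snd p))"
      using p fV by (intro SUP_upper2[where i="(f (fst p), f (snd p))"]) auto
    finally show "gdist E (fst p) (snd p) \<le> (SUP p\<in>V \<times> V. gdist E' (fst p) (snd p))" .
  qed
  moreover have "gdiam V E' \<le> gdiam V E" unfolding gdiam_def
  proof (rule SUP_least)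
    fix p assume p: "p \<in> V \<times> V"
    then have "gdist E' (fst p) (snd p) = gdist E (f (fst p)) (f (snd p))" using gd[of "f (fst p)" "f (snd p)"] ff fV by auto
    also have "\<dots> \<le> (SUP p\<in>V \<times> V. gdist E (fst p) (snd p))"
      using p fV by (intro SUP_upper2[where i="(f (fst p), f (snd p))"]) auto
    finally show "gdist E' (fst p) (snd p) \<le> (SUP p\<in>V \<times> V. gdist E (fst p) (snd p))" .
  qed
  ultimately show ?thesis by (rule antisym)
qed

lemma psi_V: "d \<ge> 1 \<Longrightarrow> r \<ge> 3 \<Longrightarrow> u \<in> Gverts (d*r) r \<Longrightarrow> psi d r u \<in> Gverts (d*r) r"
  unfolding psi_def Gverts_def using sh_sub[of "d*r"] by auto

lemma psi_psi:
  assumes d1: "d \<ge> 1" and r3: "r \<ge> 3" and u: "u \<in> Gverts (d*r) r"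
  shows "psi d r (psi d r u) = u"
proof -
  define m where "m = d*r"
  have m0: "m > 0" unfolding m_def using d1 r3 by simp
  obtain a x where ax: "u = (a,x)" "a \<subseteq> {0..<m}" "x < r" using u unfolding Gverts_def m_def by auto
  define X where "X = (r - x) mod r"
  have XX: "(r - X) mod r = x" unfolding X_def using ax(3) by (simp add: xpn)
  have "sh m (int d * int x) (sh m (int d * int X) a) = sh m (int d * int X + int d * int x) a"
    by (rule sh_add[OF m0])
  also have "\<dots> = sh m 0 a"
  proof (rule sh_cong)
    show "(int d * int X + int d * int x) mod int m = 0 mod int m"
    proof (cases "x = 0")
      case True then show ?thesis unfolding X_def by simp
    next
      case False
      then have "int X = int r - int x" unfolding X_def using ax(3) by (simp add: xpn of_nat_diff)
      then have e: "int X + int x = int r" by simp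
      have "int d * int X + int d * int x = int d * (int X + int x)" by (simp add: algebra_simps)
      then have "int d * int X + int d * int x = int m" unfolding e m_def by simp
      then show ?thesis by simp
    qed
  qed
  also have "\<dots> = a" using ax(2) by (rule sh_0)
  finally have sa: "sh m (int d * int x) (sh m (int d * int X) a) = a" .
  have p1: "psi d r u = (sh m (int d * int X) a, X)" unfolding psi_def ax X_def m_def by simp
  have p2: "psi d r (sh m (int d * int X) a, X) = (sh m (int d * int x) (sh m (int d * int X) a), x)"
    unfolding psi_def m_def[symmetric] fst_conv snd_conv XX ..
  have "psi d r (psi d r u) = (a, x)" unfolding p1 p2 sa ..
  then show ?thesis using ax(1) by simp
qed

lemma COR_Gdiam: assumes "d \<ge> 1" "r \<ge> 3"
  shows "gdiam (CORverts d r) (CORadj d r) = gdiam (Gverts (d*r) r) (Gadj (d*r) r d)"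
proof -
  have V: "CORverts d r = Gverts (d*r) r" unfolding CORverts_def Gverts_def by simp
  show ?thesis unfolding V
  proof (rule gdiam_iso[where f="psi d r"])
    show "\<And>u v. CORadj d r u v \<Longrightarrow> u \<in> Gverts (d * r) r \<and> v \<in> Gverts (d * r) r"
      unfolding CORadj_def V by blast
    show "\<And>u v. Gadj (d * r) r d u v \<Longrightarrow> u \<in> Gverts (d * r) r \<and> v \<in> Gverts (d * r) r"
      unfolding Gadj_def by blast
    show "\<And>u. u \<in> Gverts (d * r) r \<Longrightarrow> psi d r u \<in> Gverts (d * r) r" using psi_V assms by blast
    show "\<And>u. u \<in> Gverts (d * r) r \<Longrightarrow> psi d r (psi d r u) = u" using psi_psi assms by blast
    show "\<And>u v. u \<in> Gverts (d * r) r \<Longrightarrow> v \<in> Gverts (d * r) r \<Longrightarrow>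
        CORadj d r u v = Gadj (d * r) r d (psi d r u) (psi d r v)" using COR_iff assms by blast
  qed
qed



theorem CORthm:
  assumes d1: "1 \<le> d" and r3: "3 \<le> r"
  shows "gdiam (CORverts d r) (CORadj d r) =
    enat (if r = 3 then (d + 1) * r else (d + 1) * r + r div 2 - 2)"
proof -
  define M where "M = (if r = 3 then r else r + r div 2 - 2)"
  have val: "(if r = 3 then (d + 1) * r else (d + 1) * r + r div 2 - 2) = d * r + M"
    unfolding M_def using r3 by auto
  have r0: "r > 0" using r3 by simp
  have N0: "d * r > 0" using d1 r3 by simp
  have h2: "int r \<le> 2 * int (r div 2) + 1" "2 * int (r div 2) \<le> int r" by linarith+
  have Mi: "int M = (if r = 3 then int r else int r + int (r div 2) - 2)" unfolding M_def using r3
    by (auto simp: of_nat_diff)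
  have cfi: "int (d*r) \<le> int d * int r" by simp
  have dv: "d * r dvd d * r" by simp
  have up: "\<forall>x<r. \<forall>y<r. \<exists>lo hi e. lo \<le> 0 \<and> 0 \<le> hi \<and> lo \<le> e \<and> e \<le> hi \<and> pos r x e = y \<and>
     {0..<d*r} \<subseteq> (\<Union>t\<in>{lo..hi}. Wd (d*r) d (pos r x t)) \<and> 2*(hi-lo) - \<bar>e\<bar> \<le> int M"
  proof (intro allI impI)
    fix x y assume xy: "x < r" "y < r"
    define k where "k = (int y - int x) mod int r"
    have k: "0 \<le> k" "k < int r" unfolding k_def using r0 by auto
    have pk: "pos r x k = y" "pos r x (k - int r) = y" unfolding k_def using pos_k[OF r0 xy(2)] by simp_all
    have "\<exists>lo hi e. lo \<le> 0 \<and> 0 \<le> hi \<and> lo \<le> e \<and> e \<le> hi \<and> pos r x e = y \<and>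
       int r \<le> hi - lo + 1 \<and> 2*(hi-lo) - \<bar>e\<bar> \<le> int M"
    proof (cases "k = 0")
      case True
      then show ?thesis using pk(2) Mi h2 r3 by (intro exI[of _ "- int r"] exI[of _ 0] exI[of _ "- int r"]) auto
    next
      case False
      show ?thesis
      proof (cases "k \<le> int (r div 2)")
        case True
        have "2*(0 - (1 - int r)) - \<bar>k - int r\<bar> \<le> int M" using True False k Mi h2 r3 by auto
        then show ?thesis using pk(2) False k True
          by (intro exI[of _ "1 - int r"] exI[of _ 0] exI[of _ "k - int r"]) auto
      next
        case F2: False
        have "2*(k - (k - (int r - 1))) - \<bar>k\<bar> \<le> int M" using F2 False k Mi h2 r3 by auto
        then show ?thesis using pk(1) False k F2
          by (intro exI[of _ "k - (int r - 1)"] exI[of _ k] exI[of _ k]) auto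
      qed
    qed
    then obtain lo hi e where H: "lo \<le> 0" "0 \<le> hi" "lo \<le> e" "e \<le> hi" "pos r x e = y"
       "int r \<le> hi - lo + 1" "2*(hi-lo) - \<bar>e\<bar> \<le> int M" by blast
    have cov: "{0..<d*r} \<subseteq> (\<Union>t\<in>{lo..hi}. Wd (d*r) d (pos r x t))"
      by (rule ARC[OF N0 r0 dv cover_mono[OF cfi H(6)]])
    show "\<exists>lo hi e. lo \<le> 0 \<and> 0 \<le> hi \<and> lo \<le> e \<and> e \<le> hi \<and> pos r x e = y \<and>
     {0..<d*r} \<subseteq> (\<Union>t\<in>{lo..hi}. Wd (d*r) d (pos r x t)) \<and> 2*(hi-lo) - \<bar>e\<bar> \<le> int M"
      using H cov by blast
  qed
  define y0 where "y0 = (if r = 3 then 0 else r div 2)"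
  have y0r: "y0 < r" unfolding y0_def using r3 by auto
  have low: "\<forall>lo hi e. lo \<le> 0 \<and> 0 \<le> hi \<and> lo \<le> e \<and> e \<le> hi \<and> pos r 0 e = y0 \<and>
     {0..<d*r} \<subseteq> (\<Union>t\<in>{lo..hi}. Wd (d*r) d (pos r 0 t)) \<longrightarrow> int M \<le> 2*(hi-lo) - \<bar>e\<bar>"
  proof (intro allI impI, elim conjE)
    fix lo hi e assume H: "lo \<le> 0" "0 \<le> hi" "lo \<le> e" "e \<le> hi" "pos r 0 e = y0"
      "{0..<d*r} \<subseteq> (\<Union>t\<in>{lo..hi}. Wd (d*r) d (pos r 0 t))"
    have "int (d*r) \<le> int d * (hi - lo + 1)" using CNT[OF H(6)] H by simp
    then have "int d * int r \<le> int d * (hi - lo + 1)" by simp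
    then have L: "int r \<le> hi - lo + 1" using d1 by simp
    obtain K where K: "int 0 + e = int y0 + int r * K" using pos_decomp[OF r0 H(5)] by blast
    define R where "R = int r * K"
    have KC: "R = 0 \<or> R = - int r \<or> R \<ge> int r \<or> R \<le> -2 * int r"
      using K_cases[of "int r" K] unfolding R_def by auto
    have eR: "e = int y0 + R" using K unfolding R_def by simp
    have ab: "\<bar>e\<bar> \<le> hi - lo" using H by linarith
    show "int M \<le> 2*(hi-lo) - \<bar>e\<bar>"
    proof (cases "r = 3")
      case True
      then have E: "e = R" "int M = int r" using eR Mi unfolding y0_def by simp_all
      from KC show ?thesis
      proof (elim disjE)
        assume "R = 0" then show ?thesis using E L ab True by (auto simp: abs_if)
      next
        assume "R = - int r" then show ?thesis using E L ab True by (auto simp: abs_if)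
      next
        assume "R \<ge> int r" then show ?thesis using E L ab True by (auto simp: abs_if)
      next
        assume "R \<le> -2 * int r" then show ?thesis using E L ab True by (auto simp: abs_if)
      qed
    next
      case False
      then have E: "e = int (r div 2) + R" "int M = int r + int (r div 2) - 2" using eR Mi unfolding y0_def by simp_all
      from KC show ?thesis
      proof (elim disjE)
        assume "R = 0" then show ?thesis using E L ab h2 False r3 by (auto simp: abs_if)
      next
        assume "R = - int r" then show ?thesis using E L ab h2 False r3 by (auto simp: abs_if)
      next
        assume "R \<ge> int r" then show ?thesis using E L ab h2 False r3 by (auto simp: abs_if)
      next
        assume "R \<le> -2 * int r" then show ?thesis using E L ab h2 False r3 by (auto simp: abs_if)
      qed
    qed
  qed
  have "gdiam (Gverts (d*r) r) (Gadj (d*r) r d) = enat (d * r + M)"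
    by (rule Gdiam[OF _ N0 up _ y0r low]) (use r3 in auto)
  then show ?thesis unfolding COR_Gdiam[OF d1 r3] val .
qed

theorem mainTheorem10:
  shows "(\<forall>n d :: nat. 2 \<le> d \<and> d \<le> n \<and> 3 \<le> n \<longrightarrow>
           gdiam (Qverts n n) (Qadj n d n) =
             enat (n + max (n div 2) (2 * ((n + d - 1) div d) - 2))) \<and>
         (\<forall>d r :: nat. 1 \<le> d \<and> 3 \<le> r \<and> 2 \<le> d * r \<longrightarrow>
           gdiam (CORverts d r) (CORadj d r) =
             enat (if r = 3 then (d + 1) * r else (d + 1) * r + r div 2 - 2))"
  using Qthm CORthm by blast


end
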